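(* Let $\lambda\in Y^{++}$, $\nu\in Y^+$ and $u\in W^v$. Then the set $\{\mu\in W^v\lambda:\nu\in R_u(\mu)\}$ is finite.
   Context: $I$ finite, $A$ a generalized Cartan matrix, $Y$ a free $\mathbb Z$-module of finite rank with free family $(\alpha_i^\vee)_{i\in I}$ and $\alpha_i\in\mathrm{Hom}(Y,\mathbb Z)$ with $\alpha_j(\alpha_i^\vee)=a_{i,j}$; $\mathbb A=Y\otimes\mathbb R$; $r_i(v)=v-\alpha_i(v)\alpha_i^\vee$; $W^v=\langle r_i\rangle$; $Q^\vee=\bigoplus\mathbb Z\alpha_i^\vee$; $C^v_f=\{\alpha_i>0\ \forall i\}$, $\mathcal T=\bigcup_w w\overline{C^v_f}$, $Y^+=Y\cap\mathcal T$, $Y^{++}=Y\cap\overline{C^v_f}$. For $E\subset Y$, $R_i(E)=\mathrm{conv}(E\cup r_i(E))\cap(E+Q^\vee)$; for $w\in W^v$, $\mu\in Y$, $R_w(\mu)=\bigcup R_{i_1}(\cdots R_{i_k}(\{\mu\})\cdots)$ over all reduced expressions $w=r_{i_1}\cdots r_{i_k}$. *)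

theory Defs
  imports "HOL-Analysis.Analysis"
begin

(* Y = int^'d (free Z-module of finite rank), A = Y (x) R = real^'d.
   Coroots alphav i :: int^'d ; roots alpha i :: int^'d, acting by
   alpha_i(y) = sum_k alpha i $ k * y $ k  (every element of Hom(Y,Z) has this form). *)

definition gen_cartan :: "('i \<Rightarrow> 'i \<Rightarrow> int) \<Rightarrow> bool" where
  "gen_cartan A \<longleftrightarrow> (\<forall>i. A i i = 2) \<and> (\<forall>i j. i \<noteq> j \<longrightarrow> A i j \<le> 0)
     \<and> (\<forall>i j. A i j = 0 \<longleftrightarrow> A j i = 0)"

definition pairY :: "int^'d \<Rightarrow> int^'d \<Rightarrow> int" where
  "pairY a y = (\<Sum>k\<in>UNIV. a $ k * y $ k)"

definition pairA :: "int^'d \<Rightarrow> real^'d \<Rightarrow> real" where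
  "pairA a x = (\<Sum>k\<in>UNIV. real_of_int (a $ k) * x $ k)"

definition embY :: "int^'d \<Rightarrow> real^'d" where
  "embY y = (\<chi> k. real_of_int (y $ k))"

definition root_datum :: "('i::finite \<Rightarrow> 'i \<Rightarrow> int) \<Rightarrow> ('i \<Rightarrow> int^'d) \<Rightarrow> ('i \<Rightarrow> int^'d) \<Rightarrow> bool" where
  "root_datum A alphav alpha \<longleftrightarrow> gen_cartan A
     \<and> (\<forall>c::'i \<Rightarrow> int. (\<Sum>i\<in>UNIV. c i *s alphav i) = 0 \<longrightarrow> (\<forall>i. c i = 0))
     \<and> (\<forall>i j. pairY (alpha j) (alphav i) = A i j)"

definition reflA :: "('i \<Rightarrow> int^'d) \<Rightarrow> ('i \<Rightarrow> int^'d) \<Rightarrow> 'i \<Rightarrow> real^'d \<Rightarrow> real^'d" where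
  "reflA alphav alpha i v = v - pairA (alpha i) v *\<^sub>R embY (alphav i)"

definition reflY :: "('i \<Rightarrow> int^'d) \<Rightarrow> ('i \<Rightarrow> int^'d) \<Rightarrow> 'i \<Rightarrow> int^'d \<Rightarrow> int^'d" where
  "reflY alphav alpha i y = y - pairY (alpha i) y *s alphav i"

definition word_act :: "('i \<Rightarrow> int^'d) \<Rightarrow> ('i \<Rightarrow> int^'d) \<Rightarrow> 'i list \<Rightarrow> real^'d \<Rightarrow> real^'d" where
  "word_act alphav alpha ws = foldr (\<lambda>i f. reflA alphav alpha i \<circ> f) ws id"

definition Wv :: "('i \<Rightarrow> int^'d) \<Rightarrow> ('i \<Rightarrow> int^'d) \<Rightarrow> (real^'d \<Rightarrow> real^'d) set" where
  "Wv alphav alpha = {word_act alphav alpha ws | ws. True}"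

definition reduced_expr :: "('i \<Rightarrow> int^'d) \<Rightarrow> ('i \<Rightarrow> int^'d) \<Rightarrow> (real^'d \<Rightarrow> real^'d) \<Rightarrow> 'i list \<Rightarrow> bool" where
  "reduced_expr alphav alpha w ws \<longleftrightarrow> word_act alphav alpha ws = w
     \<and> (\<forall>ws'. word_act alphav alpha ws' = w \<longrightarrow> length ws \<le> length ws')"

definition Qvee :: "('i::finite \<Rightarrow> int^'d) \<Rightarrow> (int^'d) set" where
  "Qvee alphav = {\<Sum>i\<in>UNIV. n i *s alphav i | n. True}"

definition Ri :: "('i::finite \<Rightarrow> int^'d) \<Rightarrow> ('i \<Rightarrow> int^'d) \<Rightarrow> 'i \<Rightarrow> (int^'d) set \<Rightarrow> (int^'d) set" where
  "Ri alphav alpha i E = {y. (\<exists>e\<in>E. \<exists>q\<in>Qvee alphav. y = e + q)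
      \<and> embY y \<in> convex hull (embY ` (E \<union> reflY alphav alpha i ` E))}"

definition Rw :: "('i::finite \<Rightarrow> int^'d) \<Rightarrow> ('i \<Rightarrow> int^'d) \<Rightarrow> (real^'d \<Rightarrow> real^'d) \<Rightarrow> int^'d \<Rightarrow> (int^'d) set" where
  "Rw alphav alpha w mu = (\<Union>ws\<in>{ws. reduced_expr alphav alpha w ws}.
      foldr (Ri alphav alpha) ws {mu})"

definition Cvf :: "('i \<Rightarrow> int^'d) \<Rightarrow> (real^'d) set" where
  "Cvf alpha = {x. \<forall>i. pairA (alpha i) x > 0}"

definition tits_cone :: "('i \<Rightarrow> int^'d) \<Rightarrow> ('i \<Rightarrow> int^'d) \<Rightarrow> (real^'d) set" where
  "tits_cone alphav alpha = (\<Union>w\<in>Wv alphav alpha. w ` closure (Cvf alpha))"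

definition Yplus :: "('i \<Rightarrow> int^'d) \<Rightarrow> ('i \<Rightarrow> int^'d) \<Rightarrow> (int^'d) set" where
  "Yplus alphav alpha = {y. embY y \<in> tits_cone alphav alpha}"

definition Yplusplus :: "('i \<Rightarrow> int^'d) \<Rightarrow> (int^'d) set" where
  "Yplusplus alpha = {y. embY y \<in> closure (Cvf alpha)}"

definition Worbit :: "('i \<Rightarrow> int^'d) \<Rightarrow> ('i \<Rightarrow> int^'d) \<Rightarrow> int^'d \<Rightarrow> (int^'d) set" where
  "Worbit alphav alpha lam = {mu. \<exists>w\<in>Wv alphav alpha. embY mu = w (embY lam)}"

end

theory Submission
  imports Defs
begin


lemma pairA_add: "pairA a (x + y) = pairA a x + pairA a y"
  unfolding pairA_def by (simp add: sum.distrib distrib_left)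
lemma pairA_scale: "pairA a (c *\<^sub>R x) = c * pairA a x"
  unfolding pairA_def by (simp add: sum_distrib_left mult.left_commute)
lemma linear_pairA: "linear (pairA a)"
  by (rule linearI) (simp_all add: pairA_add pairA_scale)
lemma pairA_diff: "pairA a (x - y) = pairA a x - pairA a y"
  using linear_diff[OF linear_pairA] by blast
lemma pairA_zero[simp]: "pairA a 0 = 0"
  using linear_0[OF linear_pairA] by blast
lemma pairA_sum: "pairA a (\<Sum>k\<in>S. f k) = (\<Sum>k\<in>S. pairA a (f k))"
  using linear_sum[OF linear_pairA] by blast
lemma pairA_embY: "pairA a (embY y) = of_int (pairY a y)"
  unfolding pairA_def pairY_def embY_def by simp

lemma embY_add: "embY (x + y) = embY x + embY y"
  unfolding embY_def by (simp add: vec_eq_iff)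
lemma embY_diff: "embY (x - y) = embY x - embY y"
  unfolding embY_def by (simp add: vec_eq_iff)
lemma embY_scale: "embY (c *s x) = of_int c *\<^sub>R embY x"
  unfolding embY_def by (simp add: vec_eq_iff)
lemma embY_zero[simp]: "embY 0 = 0"
  unfolding embY_def by (simp add: vec_eq_iff)
lemma embY_sum: "embY (\<Sum>k\<in>S. f k) = (\<Sum>k\<in>S. embY (f k))"
  by (induction S rule: infinite_finite_induct) (auto simp: embY_add)
lemma embY_inj: "embY x = embY y \<Longrightarrow> x = y"
  unfolding embY_def by (simp add: vec_eq_iff)

lemma word_act_Nil[simp]: "word_act av al [] = id"
  unfolding word_act_def by simp
lemma word_act_Cons[simp]: "word_act av al (i # ws) = reflA av al i \<circ> word_act av al ws"
  unfolding word_act_def by simp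
lemma word_act_append: "word_act av al (ws @ vs) = word_act av al ws \<circ> word_act av al vs"
  by (induction ws) auto
lemma linear_reflA: "linear (reflA av al i)"
  by (rule linearI) (simp_all add: reflA_def pairA_add pairA_scale algebra_simps)
lemma linear_word_act: "linear (word_act av al ws)"
proof (induction ws)
  case Nil then show ?case by (simp add: id_def, rule linearI, auto)
next
  case (Cons a ws) then show ?case using linear_compose[OF Cons.IH linear_reflA] by (simp add: o_def)
qed

locale KM =
  fixes A :: "'i::finite \<Rightarrow> 'i \<Rightarrow> int" and av al :: "'i \<Rightarrow> int^'d"
  assumes rd: "root_datum A av al"
begin

abbreviation E where "E k \<equiv> embY (av k)"
abbreviation r where "r \<equiv> reflA av al"
abbreviation wd where "wd \<equiv> word_act av al"

lemma A_diag: "A i i = 2" using rd unfolding root_datum_def gen_cartan_def by auto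
lemma A_off: "i \<noteq> j \<Longrightarrow> A i j \<le> 0" using rd unfolding root_datum_def gen_cartan_def by auto
lemma A_sym0: "A i j = 0 \<longleftrightarrow> A j i = 0" using rd unfolding root_datum_def gen_cartan_def by auto
lemma free: "(\<Sum>i\<in>UNIV. c i *s av i) = 0 \<Longrightarrow> c i = 0" using rd unfolding root_datum_def by auto
lemma pairE: "pairA (al j) (E i) = of_int (A i j)"
  using rd unfolding root_datum_def by (simp add: pairA_embY)

lemma r_def': "r k x = x - pairA (al k) x *\<^sub>R E k" unfolding reflA_def by simp

lemma r_E: "r k (E k) = - E k"
proof -
  have "r k (E k) = E k - 2 *\<^sub>R E k" by (simp add: r_def' pairE A_diag)
  also have "\<dots> = - E k" by (simp add: scaleR_2)
  finally show ?thesis .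
qed

lemma r_r[simp]: "r k (r k x) = x"
  by (simp add: r_def' pairA_diff pairA_scale pairE A_diag algebra_simps)

lemma r_comp_r[simp]: "r k \<circ> r k = id" by (simp add: fun_eq_iff)

lemma r_embY: "r k (embY y) = embY (reflY av al k y)"
  by (simp add: r_def' reflY_def embY_diff embY_scale pairA_embY)

end


context KM begin

lemma E_nth: "E k $ l = of_int (av k $ l)" by (simp add: embY_def)

lemma indep_aux:
  assumes S: "(\<Sum>k\<in>UNIV. c k *\<^sub>R E k) = 0" and c1: "c k0 = 1"
  shows False
proof -
  define n where "n = card (UNIV::'i set)"
  obtain h where h: "bij_betw h {0..<n} (UNIV::'i set)"
    using ex_bij_betw_nat_finite[of "UNIV::'i set"] n_def by auto
  define g where "g = inv_into {0..<n} h"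
  have hg: "h (g k) = k" "g k < n" for k
    using h inv_into_into[of k h "{0..<n}"] unfolding g_def bij_betw_def
    by (auto simp: f_inv_into_f)
  define M :: real where "M = (\<Sum>l\<in>UNIV. \<Sum>k\<in>UNIV. \<bar>of_int (av k $ l)\<bar>)"
  define N where "N = nat \<lceil>M\<rceil> + 2"
  have M0: "M \<ge> 0" unfolding M_def by (intro sum_nonneg) auto
  have NM: "real N > M" "N > 0" "real N \<ge> 2" unfolding N_def by linarith+
  obtain q p where q: "0 < q" and qp: "\<And>t. t < n \<Longrightarrow> \<bar>of_int q * c (h t) - of_int (p t)\<bar> < 1 / real N"
    using Dirichlet_approx_simult[OF NM(2), of n "\<lambda>t. c (h t)"] by blast
  define p' where "p' k = p (g k)" for k
  have close: "\<bar>of_int q * c k - of_int (p' k)\<bar> < 1 / real N" for k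
    using qp[OF hg(2)[of k]] by (simp add: hg p'_def)
  define z where "z = (\<Sum>k\<in>UNIV. p' k *s av k)"
  have zl: "z $ l = 0" for l
  proof -
    have c0: "(\<Sum>k\<in>UNIV. c k * of_int (av k $ l)) = 0"
      using arg_cong[OF S, of "\<lambda>v. v $ l"] by (simp add: sum_component E_nth)
    have "real_of_int (z $ l) = (\<Sum>k\<in>UNIV. of_int (p' k) * of_int (av k $ l))"
      by (simp add: z_def sum_component)
    also have "\<dots> = (\<Sum>k\<in>UNIV. (of_int (p' k) - of_int q * c k) * of_int (av k $ l))"
      using c0 by (simp add: algebra_simps sum.distrib sum_subtractf sum_distrib_left[symmetric] mult.assoc)
    finally have eq: "real_of_int (z $ l) = (\<Sum>k\<in>UNIV. (of_int (p' k) - of_int q * c k) * of_int (av k $ l))" .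
    have "\<bar>real_of_int (z $ l)\<bar> \<le> (\<Sum>k\<in>UNIV. \<bar>(of_int (p' k) - of_int q * c k) * of_int (av k $ l)\<bar>)"
      unfolding eq by (rule sum_abs)
    also have "\<dots> \<le> (\<Sum>k\<in>UNIV. (1 / real N) * \<bar>of_int (av k $ l)\<bar>)"
    proof (rule sum_mono)
      fix k
      have "\<bar>of_int (p' k) - of_int q * c k\<bar> \<le> 1 / real N" using close[of k] by linarith
      then show "\<bar>(of_int (p' k) - of_int q * c k) * of_int (av k $ l)\<bar> \<le> (1 / real N) * \<bar>of_int (av k $ l)\<bar>"
        unfolding abs_mult by (rule mult_right_mono) auto
    qed
    also have "\<dots> = (1 / real N) * (\<Sum>k\<in>UNIV. \<bar>of_int (av k $ l)\<bar>)" by (simp add: sum_distrib_left)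
    also have "\<dots> \<le> (1 / real N) * M"
    proof -
      have "(\<Sum>k\<in>UNIV. \<bar>of_int (av k $ l)\<bar>) \<le> M"
        unfolding M_def by (rule member_le_sum[where f="\<lambda>l. \<Sum>k\<in>UNIV. \<bar>real_of_int (av k $ l)\<bar>"]) (auto intro: sum_nonneg)
      then show ?thesis using NM by (intro mult_left_mono) auto
    qed
    also have "\<dots> < 1" using NM M0 by (simp add: field_simps)
    finally have "\<bar>real_of_int (z $ l)\<bar> < 1" .
    then show ?thesis by linarith
  qed
  then have "z = 0" by (simp add: vec_eq_iff)
  then have "p' k0 = 0" using free[of p' k0] z_def by simp
  with close[of k0] c1 q have "\<bar>of_int q\<bar> < 1 / real N" by simp
  moreover have "1 / real N \<le> 1/2" using NM by (simp add: field_simps)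
  ultimately show False using q by linarith
qed

lemma indep: assumes "(\<Sum>k\<in>UNIV. c k *\<^sub>R E k) = 0" shows "c k = 0"
proof (rule ccontr)
  assume ne: "c k \<noteq> 0"
  have "(\<Sum>j\<in>UNIV. (c j / c k) *\<^sub>R E j) = (1 / c k) *\<^sub>R (\<Sum>j\<in>UNIV. c j *\<^sub>R E j)"
    by (simp add: scaleR_sum_right)
  also have "\<dots> = 0" using assms by simp
  finally show False using indep_aux[of "\<lambda>j. c j / c k" k] ne by simp
qed

lemma E_inj: "inj E"
proof (rule injI)
  fix x y assume xy: "E x = E y"
  show "x = y"
  proof (rule ccontr)
    assume ne: "x \<noteq> y"
    define c where "c k = (if k = x then 1 else if k = y then -1 else (0::real))" for k
    have "(\<Sum>k\<in>UNIV. c k *\<^sub>R E k) = (\<Sum>k\<in>{x,y}. c k *\<^sub>R E k)"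
      by (rule sum.mono_neutral_right) (auto simp: c_def)
    also have "\<dots> = 0" using ne xy by (simp add: c_def)
    finally have "c x = 0" by (rule indep)
    then show False by (simp add: c_def)
  qed
qed

lemma independent_E: "independent (range E)"
  unfolding independent_explicit_module
proof (intro allI impI)
  fix t u v assume t: "finite t" "t \<subseteq> range E" "(\<Sum>v\<in>t. u v *\<^sub>R v) = 0" "v \<in> t"
  define c where "c k = (if E k \<in> t then u (E k) else 0)" for k
  have "(\<Sum>k\<in>UNIV. c k *\<^sub>R E k) = (\<Sum>k\<in>E -` t. u (E k) *\<^sub>R E k)"
    by (rule sum.mono_neutral_cong_right) (auto simp: c_def)
  also have "\<dots> = (\<Sum>v\<in>E ` (E -` t). u v *\<^sub>R v)"
    by (subst sum.reindex) (auto intro: inj_on_subset[OF E_inj])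
  also have "E ` (E -` t) = t" using t(2) by auto
  finally have "(\<Sum>k\<in>UNIV. c k *\<^sub>R E k) = 0" using t(3) by simp
  moreover obtain k where "v = E k" using t by auto
  ultimately show "u v = 0" using indep[of c k] t(4) by (simp add: c_def)
qed

lemma ex_h: "\<exists>h. linear h \<and> (\<forall>k. h (E k) = 1)"
  using linear_independent_extend[OF independent_E, of "\<lambda>_. 1"] by auto

end


definition stp :: "'i \<Rightarrow> 'i \<Rightarrow> real \<Rightarrow> real \<Rightarrow> real \<Rightarrow> real \<Rightarrow> 'i \<Rightarrow> real \<times> real \<Rightarrow> real \<times> real" where
  "stp i j p q a0 b0 x uv = (if x = i then (- a0 - fst uv + p * snd uv, snd uv) else (fst uv, - b0 + q * fst uv - snd uv))"

primrec alt :: "'i \<Rightarrow> 'i \<Rightarrow> nat \<Rightarrow> 'i list" where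
  "alt x y 0 = []"
| "alt x y (Suc k) = alt y x k @ [y]"

lemma length_alt[simp]: "length (alt x y k) = k" by (induction k arbitrary: x y) auto
lemma set_alt: "set (alt x y k) \<subseteq> {x, y}" by (induction k arbitrary: x y) auto
lemma last_alt: "last (alt x y (Suc k)) = y" by simp
lemma alt_Cons: "alt x y (Suc k) = (if even k then y else x) # alt x y k"
  by (induction k arbitrary: x y) auto
lemma alt_split: "\<exists>Z. alt x y (m + t) = Z @ alt x y m"
proof (induction m arbitrary: x y)
  case 0 then show ?case by simp
next
  case (Suc m)
  then obtain Z where "alt y x (m + t) = Z @ alt y x m" by blast
  then show ?case by (intro exI[of _ Z]) simp
qed

lemma alt_char:
  assumes "x \<noteq> y" "set xs \<subseteq> {x, y}" "successively (\<noteq>) xs" "xs = [] \<or> last xs = y"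
  shows "xs = alt x y (length xs)"
  using assms
proof (induction xs arbitrary: x y rule: rev_induct)
  case Nil then show ?case by simp
next
  case (snoc a xs)
  have a: "a = y" using snoc.prems by simp
  have s: "successively (\<noteq>) xs" using snoc.prems(3) by (simp add: successively_append_iff)
  have "xs = [] \<or> last xs = x"
  proof (cases "xs = []")
    case False
    then have "last xs \<noteq> a" using snoc.prems(3) by (simp add: successively_append_iff)
    moreover have "last xs \<in> {x, y}" using last_in_set[OF False] snoc.prems(2) by auto
    ultimately show ?thesis using a by auto
  qed simp
  then have "xs = alt y x (length xs)" using snoc.IH[of y x] snoc.prems s by auto
  then show ?case using a by simp
qed

lemma not_successively_split:
  "\<not> successively (\<noteq>) xs \<Longrightarrow> \<exists>ys x zs. xs = ys @ x # x # zs"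
proof (induction xs)
  case Nil then show ?case by simp
next
  case (Cons a xs)
  show ?case
  proof (cases xs)
    case Nil then show ?thesis using Cons.prems by simp
  next
    case (Cons b ys)
    show ?thesis
    proof (cases "a = b")
      case True then show ?thesis using Cons by (intro exI[of _ "[]"]) auto
    next
      case False
      then have "\<not> successively (\<noteq>) xs" using Cons.prems \<open>xs = b # ys\<close> by simp
      then obtain us z zs where "xs = us @ z # z # zs" using Cons.IH by blast
      then show ?thesis by (intro exI[of _ "a # us"]) auto
    qed
  qed
qed

context KM begin

definition len :: "(real^'d \<Rightarrow> real^'d) \<Rightarrow> nat" where
  "len f = (LEAST n. \<exists>ws. length ws = n \<and> wd ws = f)"

lemma len_le: "wd ws = f \<Longrightarrow> len f \<le> length ws"
  unfolding len_def by (rule Least_le) auto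

lemma len_ex: "f \<in> Wv av al \<Longrightarrow> \<exists>ws. wd ws = f \<and> length ws = len f"
proof -
  assume "f \<in> Wv av al"
  then obtain ws where "wd ws = f" unfolding Wv_def by auto
  then have "\<exists>n ws. length ws = n \<and> wd ws = f" by blast
  from LeastI_ex[OF this] show ?thesis unfolding len_def by blast
qed

lemma wd_Wv[simp]: "wd ws \<in> Wv av al" unfolding Wv_def by auto

definition Pos :: "(real^'d) set" where
  "Pos = {x. \<exists>c. (\<forall>k. c k \<ge> 0) \<and> x = (\<Sum>k\<in>UNIV. c k *\<^sub>R E k)}"

lemma Pos_add: "x \<in> Pos \<Longrightarrow> y \<in> Pos \<Longrightarrow> x + y \<in> Pos"
  unfolding Pos_def
proof clarify
  fix c d :: "'i \<Rightarrow> real" assume "\<forall>k. c k \<ge> 0" "\<forall>k. d k \<ge> 0"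
  then show "\<exists>e. (\<forall>k. 0 \<le> e k) \<and> (\<Sum>k\<in>UNIV. c k *\<^sub>R E k) + (\<Sum>k\<in>UNIV. d k *\<^sub>R E k) = (\<Sum>k\<in>UNIV. e k *\<^sub>R E k)"
    by (intro exI[of _ "\<lambda>k. c k + d k"]) (auto simp: sum.distrib scaleR_add_left)
qed

lemma Pos_scale: "x \<in> Pos \<Longrightarrow> a \<ge> 0 \<Longrightarrow> a *\<^sub>R x \<in> Pos"
  unfolding Pos_def
proof clarify
  fix c :: "'i \<Rightarrow> real" assume "\<forall>k. c k \<ge> 0" "a \<ge> 0"
  then show "\<exists>e. (\<forall>k. 0 \<le> e k) \<and> a *\<^sub>R (\<Sum>k\<in>UNIV. c k *\<^sub>R E k) = (\<Sum>k\<in>UNIV. e k *\<^sub>R E k)"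
    by (intro exI[of _ "\<lambda>k. a * c k"]) (auto simp: scaleR_sum_right)
qed

lemma Pos_E: "E i \<in> Pos"
  unfolding Pos_def
proof (intro CollectI exI[of _ "\<lambda>k. if k = i then 1 else 0"] conjI)
  show "E i = (\<Sum>k\<in>UNIV. (if k = i then 1 else 0) *\<^sub>R E k)"
    by (simp add: if_distrib[of "\<lambda>c. c *\<^sub>R _"] cong: if_cong)
qed auto

lemma r_form1: "r k (y + u *\<^sub>R E k + v *\<^sub>R E l) = y + (- pairA (al k) y - u - v * of_int (A l k)) *\<^sub>R E k + v *\<^sub>R E l"
proof -
  have "pairA (al k) (y + u *\<^sub>R E k + v *\<^sub>R E l) = pairA (al k) y + 2 * u + v * of_int (A l k)"
    by (simp add: pairA_add pairA_scale pairE A_diag)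
  then show ?thesis unfolding r_def' by (simp only:) (simp add: vec_eq_iff algebra_simps)
qed
lemma r_form2: "r l (y + u *\<^sub>R E k + v *\<^sub>R E l) = y + u *\<^sub>R E k + (- pairA (al l) y - v - u * of_int (A k l)) *\<^sub>R E l"
proof -
  have "pairA (al l) (y + u *\<^sub>R E k + v *\<^sub>R E l) = pairA (al l) y + u * of_int (A k l) + 2 * v"
    by (simp add: pairA_add pairA_scale pairE A_diag)
  then show ?thesis unfolding r_def' by (simp only:) (simp add: vec_eq_iff algebra_simps)
qed

lemma wd_pair:
  assumes "i \<noteq> j" "set ws \<subseteq> {i, j}"
  shows "wd ws (y + u *\<^sub>R E i + v *\<^sub>R E j) =
    (let F = foldr (stp i j (of_int (- A j i)) (of_int (- A i j)) (pairA (al i) y) (pairA (al j) y)) ws (u, v)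
     in y + fst F *\<^sub>R E i + snd F *\<^sub>R E j)"
  using assms(2)
proof (induction ws)
  case Nil then show ?case by simp
next
  case (Cons x ws)
  let ?st = "stp i j (of_int (- A j i)) (of_int (- A i j)) (pairA (al i) y) (pairA (al j) y)"
  obtain a b where ab: "foldr ?st ws (u, v) = (a, b)" by (cases "foldr ?st ws (u, v)")
  have IH: "wd ws (y + u *\<^sub>R E i + v *\<^sub>R E j) = y + a *\<^sub>R E i + b *\<^sub>R E j"
    using Cons ab by (simp add: Let_def)
  have st: "foldr ?st (x # ws) (u, v) = ?st x (a, b)" using ab by simp
  have x: "x = i \<or> x = j" using Cons.prems by auto
  then show ?case
  proof
    assume "x = i"
    then show ?thesis unfolding Let_def st using IH assms(1) by (simp add: stp_def r_form1 mult.commute)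
  next
    assume "x = j"
    then show ?thesis unfolding Let_def st using IH assms(1) by (simp add: stp_def r_form2 mult.commute)
  qed
qed

end


lemma arith_inf1: "(0::real) \<le> a \<Longrightarrow> 0 \<le> b \<Longrightarrow> 0 \<le> p \<Longrightarrow> 0 \<le> q \<Longrightarrow> 4 \<le> p*q \<Longrightarrow> p*b \<le> 2*a \<Longrightarrow> 2*b \<le> q*a"
proof -
  assume h: "(0::real) \<le> a" "0 \<le> b" "0 \<le> p" "0 \<le> q" "4 \<le> p*q" "p*b \<le> 2*a"
  have "q*(p*b) \<le> q*(2*a)" using h by (intro mult_left_mono) auto
  moreover have "4*b \<le> (p*q)*b" using h by (intro mult_right_mono) auto
  ultimately show ?thesis by (simp add: algebra_simps)
qed

lemma inf_case:
  fixes p q :: real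
  assumes "i \<noteq> j" "0 \<le> p" "0 \<le> q" "4 \<le> p*q"
  shows "fst (foldr (stp i j p q 0 0) (alt i j k) (1,0)) \<ge> 0 \<and> snd (foldr (stp i j p q 0 0) (alt i j k) (1,0)) \<ge> 0 \<and>
    (if even k then p * snd (foldr (stp i j p q 0 0) (alt i j k) (1,0)) \<le> 2 * fst (foldr (stp i j p q 0 0) (alt i j k) (1,0))
     else q * fst (foldr (stp i j p q 0 0) (alt i j k) (1,0)) \<le> 2 * snd (foldr (stp i j p q 0 0) (alt i j k) (1,0)))"
proof (induction k)
  case 0 then show ?case by simp
next
  case (Suc k)
  obtain a b where ab: "foldr (stp i j p q 0 0) (alt i j k) (1,0) = (a, b)" by (cases "foldr (stp i j p q 0 0) (alt i j k) (1,0)")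
  have IH: "a \<ge> 0" "b \<ge> 0" "if even k then p * b \<le> 2 * a else q * a \<le> 2 * b" using Suc ab by auto
  show ?case
  proof (cases "even k")
    case True
    then have "p * b \<le> 2 * a" using IH by simp
    then have "2*b \<le> q*a" using arith_inf1[of a b p q] IH assms by simp
    have st: "foldr (stp i j p q 0 0) (alt i j (Suc k)) (1,0) = stp i j p q 0 0 j (a, b)"
      using True ab by (simp only: alt_Cons foldr.simps o_def if_True)
    show ?thesis unfolding st using True IH assms \<open>2*b \<le> q*a\<close> by (simp add: stp_def algebra_simps)
  next
    case False
    then have "q * a \<le> 2 * b" using IH by simp
    then have "2*a \<le> p*b" using arith_inf1[of b a q p] IH assms by (simp add: mult.commute)
    have st: "foldr (stp i j p q 0 0) (alt i j (Suc k)) (1,0) = stp i j p q 0 0 i (a, b)"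
      using False ab by (simp only: alt_Cons foldr.simps o_def if_False)
    show ?thesis unfolding st using False IH assms \<open>2*a \<le> p*b\<close> by (simp add: stp_def algebra_simps)
  qed
qed

lemma braid_00: "i \<noteq> j \<Longrightarrow> foldr (stp i j 0 0 a0 b0) (alt i j 2) (0,0) = foldr (stp i j 0 0 a0 b0) (alt j i 2) (0,0)"
  by (simp add: stp_def numeral_eq_Suc algebra_simps)
lemma braid_11: "i \<noteq> j \<Longrightarrow> foldr (stp i j 1 1 a0 b0) (alt i j 3) (0,0) = foldr (stp i j 1 1 a0 b0) (alt j i 3) (0,0)"
  by (simp add: stp_def numeral_eq_Suc algebra_simps)
lemma braid_12: "i \<noteq> j \<Longrightarrow> foldr (stp i j 1 2 a0 b0) (alt i j 4) (0,0) = foldr (stp i j 1 2 a0 b0) (alt j i 4) (0,0)"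
  by (simp add: stp_def numeral_eq_Suc algebra_simps)
lemma braid_21: "i \<noteq> j \<Longrightarrow> foldr (stp i j 2 1 a0 b0) (alt i j 4) (0,0) = foldr (stp i j 2 1 a0 b0) (alt j i 4) (0,0)"
  by (simp add: stp_def numeral_eq_Suc algebra_simps)
lemma braid_13: "i \<noteq> j \<Longrightarrow> foldr (stp i j 1 3 a0 b0) (alt i j 6) (0,0) = foldr (stp i j 1 3 a0 b0) (alt j i 6) (0,0)"
  by (simp add: stp_def numeral_eq_Suc algebra_simps)
lemma braid_31: "i \<noteq> j \<Longrightarrow> foldr (stp i j 3 1 a0 b0) (alt i j 6) (0,0) = foldr (stp i j 3 1 a0 b0) (alt j i 6) (0,0)"
  by (simp add: stp_def numeral_eq_Suc algebra_simps)

definition posc where "posc i j p q k \<longleftrightarrow> fst (foldr (stp i j p q 0 0) (alt i j k) (1,0)) \<ge> 0 \<and> snd (foldr (stp i j p q 0 0) (alt i j k) (1,0)) \<ge> 0"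

lemma pos_00: "i \<noteq> j \<Longrightarrow> k < 2 \<Longrightarrow> posc i j 0 0 k"
  by (auto simp: posc_def stp_def numeral_eq_Suc less_Suc_eq)
lemma pos_11: "i \<noteq> j \<Longrightarrow> k < 3 \<Longrightarrow> posc i j 1 1 k"
  by (auto simp: posc_def stp_def numeral_eq_Suc less_Suc_eq)
lemma pos_12: "i \<noteq> j \<Longrightarrow> k < 4 \<Longrightarrow> posc i j 1 2 k"
  by (auto simp: posc_def stp_def numeral_eq_Suc less_Suc_eq)
lemma pos_21: "i \<noteq> j \<Longrightarrow> k < 4 \<Longrightarrow> posc i j 2 1 k"
  by (auto simp: posc_def stp_def numeral_eq_Suc less_Suc_eq)
lemma pos_13: "i \<noteq> j \<Longrightarrow> k < 6 \<Longrightarrow> posc i j 1 3 k"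
  by (auto simp: posc_def stp_def numeral_eq_Suc less_Suc_eq)
lemma pos_31: "i \<noteq> j \<Longrightarrow> k < 6 \<Longrightarrow> posc i j 3 1 k"
  by (auto simp: posc_def stp_def numeral_eq_Suc less_Suc_eq)

lemma int_cases:
  fixes P Q :: int
  assumes "0 \<le> P" "0 \<le> Q" "P = 0 \<longleftrightarrow> Q = 0" "P * Q < 4"
  shows "(P = 0 \<and> Q = 0) \<or> (P = 1 \<and> Q = 1) \<or> (P = 1 \<and> Q = 2) \<or> (P = 2 \<and> Q = 1) \<or> (P = 1 \<and> Q = 3) \<or> (P = 3 \<and> Q = 1)"
proof -
  have "\<not> (P \<ge> 2 \<and> Q \<ge> 2)"
  proof
    assume "P \<ge> 2 \<and> Q \<ge> 2"
    then have "2 * 2 \<le> P * Q" by (intro mult_mono) auto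
    then show False using assms by simp
  qed
  moreover have "P \<le> 1 \<Longrightarrow> Q < 4"
  proof -
    assume "P \<le> 1"
    then have "P = 0 \<or> P = 1" using assms by auto
    then show "Q < 4" using assms by auto
  qed
  moreover have "Q \<le> 1 \<Longrightarrow> P < 4"
  proof -
    assume "Q \<le> 1"
    then have "Q = 0 \<or> Q = 1" using assms by auto
    then show "P < 4" using assms by auto
  qed
  ultimately show ?thesis using assms by auto
qed

context KM begin

lemma wd_Ei:
  assumes "i \<noteq> j" "set ws \<subseteq> {i, j}"
  shows "wd ws (E i) = fst (foldr (stp i j (of_int (- A j i)) (of_int (- A i j)) 0 0) ws (1,0)) *\<^sub>R E i
     + snd (foldr (stp i j (of_int (- A j i)) (of_int (- A i j)) 0 0) ws (1,0)) *\<^sub>R E j"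
  using wd_pair[OF assms, of 0 1 0] by (simp add: Let_def)

lemma braid_wd:
  assumes "i \<noteq> j" "\<And>a0 b0. foldr (stp i j p q a0 b0) (alt i j m) (0,0) = foldr (stp i j p q a0 b0) (alt j i m) (0,0)"
    "p = of_int (- A j i)" "q = of_int (- A i j)"
  shows "wd (alt i j m) = wd (alt j i m)"
proof
  fix y
  have s2: "set (alt j i m) \<subseteq> {i, j}" using set_alt[of j i m] by auto
  have "wd (alt i j m) (y + 0 *\<^sub>R E i + 0 *\<^sub>R E j) = wd (alt j i m) (y + 0 *\<^sub>R E i + 0 *\<^sub>R E j)"
    using wd_pair[OF assms(1) set_alt[of i j m], of y 0 0] wd_pair[OF assms(1) s2, of y 0 0]
      assms(2)[of "pairA (al i) y" "pairA (al j) y"] assms(3,4)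
    by (auto simp: Let_def insert_commute)
  then show "wd (alt i j m) y = wd (alt j i m) y" by simp
qed

lemma braid_contra:
  assumes ij: "i \<noteq> j" and br: "wd (alt i j m) = wd (alt j i m)" and m: "0 < m" "m \<le> k"
    and d: "\<forall>us'. set us' \<subseteq> {i,j} \<longrightarrow> wd us' = wd (alt i j k) \<circ> r i \<longrightarrow> k \<le> length us'"
  shows False
proof -
  obtain Z where Z: "alt i j k = Z @ alt i j m" using alt_split[of i j m "k - m"] m by auto
  obtain m' where m': "m = Suc m'" using m by (cases m) auto
  define B where "B = butlast (alt j i m)"
  have B: "alt j i m = B @ [i]" unfolding B_def m' by simp
  have "wd (alt i j k) = wd Z \<circ> wd (alt j i m)" using Z br by (simp add: word_act_append)
  also have "\<dots> = wd (Z @ B) \<circ> r i" using B by (simp add: word_act_append o_assoc)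
  finally have "wd (alt i j k) \<circ> r i = wd (Z @ B)" by (simp add: o_assoc fun_eq_iff)
  moreover have "set (Z @ B) \<subseteq> {i, j}"
  proof -
    have "set Z \<subseteq> set (alt i j k)" using Z by auto
    moreover have "set B \<subseteq> set (alt j i m)" using B by auto
    ultimately show ?thesis using set_alt[of i j k] set_alt[of j i m] by auto
  qed
  moreover have "length (Z @ B) < k"
  proof -
    have "length Z + m = k" using arg_cong[OF Z, of length] by simp
    moreover have "length B + 1 = m" using arg_cong[OF B, of length] by simp
    ultimately show ?thesis using m by simp
  qed
  ultimately show False using d by fastforce
qed

lemma rank2:
  assumes ij: "i \<noteq> j" and us: "set us \<subseteq> {i,j}"
    and mn: "\<forall>us'. set us' \<subseteq> {i,j} \<longrightarrow> wd us' = wd us \<longrightarrow> length us \<le> length us'"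
    and d: "\<forall>us'. set us' \<subseteq> {i,j} \<longrightarrow> wd us' = wd us \<circ> r i \<longrightarrow> length us \<le> length us'"
  shows "\<exists>a b. a \<ge> 0 \<and> b \<ge> 0 \<and> wd us (E i) = a *\<^sub>R E i + b *\<^sub>R E j"
proof -
  have succ: "successively (\<noteq>) us"
  proof (rule ccontr)
    assume "\<not> successively (\<noteq>) us"
    then obtain ys x zs where u: "us = ys @ x # x # zs" using not_successively_split by blast
    have "wd us = wd (ys @ zs)" unfolding u by (simp add: word_act_append fun_eq_iff)
    moreover have "set (ys @ zs) \<subseteq> {i,j}" using us u by auto
    ultimately have "length us \<le> length (ys @ zs)" using mn[rule_format, of "ys @ zs"] by simp
    then show False using u by simp
  qed
  have lastj: "us = [] \<or> last us = j"
  proof (rule ccontr)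
    assume "\<not> (us = [] \<or> last us = j)"
    then have ne: "us \<noteq> []" and "last us \<noteq> j" by auto
    have "last us \<in> set us" using ne by simp
    then have li: "last us = i" using us \<open>last us \<noteq> j\<close> by auto
    have u: "us = butlast us @ [i]" using append_butlast_last_id[OF ne] li by simp
    have "wd us \<circ> r i = wd (butlast us)"
      by (subst u) (simp add: word_act_append fun_eq_iff)
    moreover have "set (butlast us) \<subseteq> {i,j}" using us by (meson in_set_butlastD subset_code(1))
    moreover have "length (butlast us) < length us" using ne by simp
    ultimately show False using d[rule_format, of "butlast us"] by simp
  qed
  define k where "k = length us"
  have uk: "us = alt i j k" unfolding k_def by (rule alt_char[OF ij us succ lastj])
  define P where "P = - A j i"
  define Q where "Q = - A i j"
  have P0: "P \<ge> 0" "Q \<ge> 0" unfolding P_def Q_def using A_off ij by (auto simp: le_minus_iff)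
  have PQ0: "P = 0 \<longleftrightarrow> Q = 0" unfolding P_def Q_def using A_sym0 by auto
  have dk: "\<forall>us'. set us' \<subseteq> {i,j} \<longrightarrow> wd us' = wd (alt i j k) \<circ> r i \<longrightarrow> k \<le> length us'"
    using d unfolding uk by simp
  have pc: "posc i j (of_int P) (of_int Q) k"
  proof (cases "P * Q \<ge> 4")
    case True
    have "real_of_int 4 \<le> real_of_int (P * Q)" using True by (simp only: of_int_le_iff)
    then have "4 \<le> real_of_int P * real_of_int Q" by simp
    then show ?thesis using inf_case[OF ij, of "of_int P" "of_int Q" k] P0 unfolding posc_def by auto
  next
    case False
    have fin: "posc i j p q k"
      if pq: "p = of_int P" "q = of_int Q" and br: "\<And>a0 b0. foldr (stp i j p q a0 b0) (alt i j m) (0,0) = foldr (stp i j p q a0 b0) (alt j i m) (0,0)"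
        and m0: "0 < m" and pk: "\<And>k. k < m \<Longrightarrow> posc i j p q k" for m p q
    proof (cases "k < m")
      case True then show ?thesis using pk by blast
    next
      case False
      have "wd (alt i j m) = wd (alt j i m)"
        by (rule braid_wd[OF ij br]) (simp_all add: pq P_def Q_def)
      then show ?thesis using braid_contra[OF ij _ m0 _ dk] False by simp
    qed
    have "(P = 0 \<and> Q = 0) \<or> (P = 1 \<and> Q = 1) \<or> (P = 1 \<and> Q = 2) \<or> (P = 2 \<and> Q = 1) \<or> (P = 1 \<and> Q = 3) \<or> (P = 3 \<and> Q = 1)"
      using int_cases[OF P0 PQ0] False by simp
    then show ?thesis
    proof (elim disjE conjE)
      assume "P = 0" "Q = 0" then show ?thesis using fin[of 0 0 2, OF _ _ braid_00[OF ij] _ pos_00[OF ij]] by simp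
    next
      assume "P = 1" "Q = 1" then show ?thesis using fin[of 1 1 3, OF _ _ braid_11[OF ij] _ pos_11[OF ij]] by simp
    next
      assume "P = 1" "Q = 2" then show ?thesis using fin[of 1 2 4, OF _ _ braid_12[OF ij] _ pos_12[OF ij]] by simp
    next
      assume "P = 2" "Q = 1" then show ?thesis using fin[of 2 1 4, OF _ _ braid_21[OF ij] _ pos_21[OF ij]] by simp
    next
      assume "P = 1" "Q = 3" then show ?thesis using fin[of 1 3 6, OF _ _ braid_13[OF ij] _ pos_13[OF ij]] by simp
    next
      assume "P = 3" "Q = 1" then show ?thesis using fin[of 3 1 6, OF _ _ braid_31[OF ij] _ pos_31[OF ij]] by simp
    qed
  qed
  show ?thesis
    using wd_Ei[OF ij us] pc unfolding posc_def uk[symmetric] P_def Q_def by blast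
qed

end


context KM begin

lemma len_comp: "f \<in> Wv av al \<Longrightarrow> len (f \<circ> wd us) \<le> len f + length us"
proof -
  assume "f \<in> Wv av al"
  then obtain vs where "wd vs = f" "length vs = len f" using len_ex by blast
  then have "f \<circ> wd us = wd (vs @ us)" by (simp add: word_act_append)
  then show ?thesis using len_le[of "vs @ us"] \<open>length vs = len f\<close> by simp
qed

lemma Wv_comp: "f \<in> Wv av al \<Longrightarrow> f \<circ> wd us \<in> Wv av al"
proof -
  assume "f \<in> Wv av al"
  then obtain vs where "wd vs = f" unfolding Wv_def by auto
  then have "f \<circ> wd us = wd (vs @ us)" by (simp add: word_act_append)
  then show ?thesis by simp
qed

lemma Wv_linear: "f \<in> Wv av al \<Longrightarrow> linear f"
  unfolding Wv_def using linear_word_act by auto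

lemma Pos_zero: "0 \<in> Pos"
  unfolding Pos_def by (intro CollectI exI[of _ "\<lambda>_. 0"]) auto

lemma pos_thm:
  "\<forall>w i. w \<in> Wv av al \<longrightarrow> len w = n \<longrightarrow> len (w \<circ> r i) \<ge> n \<longrightarrow> w (E i) \<in> Pos"
proof (induction n rule: less_induct)
  case (less n)
  show ?case
  proof (intro allI impI)
    fix w i assume w: "w \<in> Wv av al" and lw: "len w = n" and lwi: "len (w \<circ> r i) \<ge> n"
    obtain ws where ws: "wd ws = w" "length ws = n" using len_ex[OF w] lw by blast
    show "w (E i) \<in> Pos"
    proof (cases "n = 0")
      case True
      then have "w = id" using ws by simp
      then show ?thesis using Pos_E by simp
    next
      case False
      then have ne: "ws \<noteq> []" using ws by auto
      define j where "j = last ws"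
      define ws0 where "ws0 = butlast ws"
      have wsj: "ws = ws0 @ [j]" unfolding j_def ws0_def using ne by simp
      have "w = wd ws0 \<circ> r j" using ws(1) wsj by (simp add: word_act_append)
      then have wrj: "w \<circ> r j = wd ws0" by (simp add: fun_eq_iff)
      have l1: "len (w \<circ> r j) \<le> n - 1" using len_le[of ws0] wrj ws(2) wsj by simp
      have l2: "n \<le> len (w \<circ> r j) + 1"
      proof -
        have "w = (w \<circ> r j) \<circ> wd [j]" by (simp add: fun_eq_iff)
        then have "len w \<le> len (w \<circ> r j) + length [j]" using len_comp[of "w \<circ> r j" "[j]"] wrj by simp
        then show ?thesis using lw by simp
      qed
      have lj: "len (w \<circ> r j) = n - 1" using l1 l2 False by linarith
      have ij: "i \<noteq> j" using lj lwi False by auto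
      define C where "C = {l. \<exists>v us. v \<in> Wv av al \<and> set us \<subseteq> {i,j} \<and> v \<circ> wd us = w \<and> len v + length us = n \<and> l = len v}"
      have nC: "n \<in> C" unfolding C_def using w lw by (intro CollectI exI[of _ w] exI[of _ "[]"]) auto
      define l0 where "l0 = (LEAST l. l \<in> C)"
      have l0C: "l0 \<in> C" unfolding l0_def using nC by (rule LeastI)
      have l0min: "l0 \<le> l" if "l \<in> C" for l unfolding l0_def using that by (rule Least_le)
      obtain v us where v: "v \<in> Wv av al" and us: "set us \<subseteq> {i,j}" and vus: "v \<circ> wd us = w"
        and lvus: "len v + length us = n" and lv0: "l0 = len v"
        using l0C unfolding C_def by blast
      have "n - 1 \<in> C" unfolding C_def
        using lj Wv_comp[OF w, of "[j]"] False
        by (intro CollectI exI[of _ "w \<circ> r j"] exI[of _ "[j]"]) (auto simp: fun_eq_iff)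
      then have lvn: "len v < n" using l0min lv0 False by fastforce
      have up: "len (v \<circ> r x) \<ge> len v" if x: "x \<in> {i,j}" for x
      proof (rule ccontr)
        assume "\<not> len (v \<circ> r x) \<ge> len v"
        then have lt: "len (v \<circ> r x) < len v" by simp
        have v'W: "v \<circ> r x \<in> Wv av al" using Wv_comp[OF v, of "[x]"] by simp
        have eq: "(v \<circ> r x) \<circ> wd (x # us) = w" using vus by (simp add: fun_eq_iff)
        have "len w \<le> len (v \<circ> r x) + length (x # us)" using len_comp[OF v'W, of "x # us"] eq by simp
        then have "len (v \<circ> r x) + length (x # us) = n" using lt lvus lw by simp
        then have "len (v \<circ> r x) \<in> C" unfolding C_def using v'W eq us x
          by (intro CollectI exI[of _ "v \<circ> r x"] exI[of _ "x # us"]) auto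
        then show False using l0min lv0 lt by fastforce
      qed
      have vEi: "v (E i) \<in> Pos" using less.IH[OF lvn, rule_format, OF v refl up[of i]] by simp
      have vEj: "v (E j) \<in> Pos" using less.IH[OF lvn, rule_format, OF v refl up[of j]] by simp
      have mn: "\<forall>us'. set us' \<subseteq> {i,j} \<longrightarrow> wd us' = wd us \<longrightarrow> length us \<le> length us'"
      proof (intro allI impI)
        fix us' assume "set us' \<subseteq> {i,j}" "wd us' = wd us"
        then have "v \<circ> wd us' = w" using vus by simp
        then have "len w \<le> len v + length us'" using len_comp[OF v, of us'] by simp
        then show "length us \<le> length us'" using lw lvus by simp
      qed
      have d: "\<forall>us'. set us' \<subseteq> {i,j} \<longrightarrow> wd us' = wd us \<circ> r i \<longrightarrow> length us \<le> length us'"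
      proof (intro allI impI)
        fix us' assume "set us' \<subseteq> {i,j}" "wd us' = wd us \<circ> r i"
        then have "v \<circ> wd us' = w \<circ> r i" using vus by (simp add: o_assoc)
        then have "len (w \<circ> r i) \<le> len v + length us'" using len_comp[OF v, of us'] by simp
        then show "length us \<le> length us'" using lwi lvus by simp
      qed
      obtain a b where ab: "a \<ge> 0" "b \<ge> 0" "wd us (E i) = a *\<^sub>R E i + b *\<^sub>R E j"
        using rank2[OF ij us mn d] by blast
      have "w (E i) = v (wd us (E i))" using vus by (simp add: fun_eq_iff)
      also have "\<dots> = a *\<^sub>R v (E i) + b *\<^sub>R v (E j)"
        using Wv_linear[OF v] ab(3) by (simp add: linear_add linear_scale)
      finally show ?thesis using Pos_add Pos_scale vEi vEj ab by simp
    qed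
  qed
qed

lemma dom_aux:
  assumes x: "\<forall>k. pairA (al k) x \<ge> 0"
  shows "length ws = len (wd ws) \<Longrightarrow> x - wd ws x \<in> Pos"
proof (induction ws rule: rev_induct)
  case Nil then show ?case using Pos_zero by simp
next
  case (snoc j ws)
  have c: "wd (ws @ [j]) = wd ws \<circ> wd [j]" by (simp add: word_act_append)
  have "len (wd (ws @ [j])) \<le> len (wd ws) + 1" using len_comp[of "wd ws" "[j]"] c by simp
  moreover have "len (wd ws) \<le> length ws" by (rule len_le) simp
  ultimately have red: "length ws = len (wd ws)" using snoc.prems by simp
  have e: "wd ws \<circ> r j = wd (ws @ [j])" by (simp add: word_act_append)
  have "len (wd ws \<circ> r j) = length ws + 1" using snoc.prems unfolding e by simp
  then have "wd ws (E j) \<in> Pos"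
    using pos_thm[of "len (wd ws)", rule_format, of "wd ws" j] red by simp
  moreover have "x - wd ws x \<in> Pos" using snoc.IH red by simp
  moreover have eqn: "x - wd (ws @ [j]) x = (x - wd ws x) + pairA (al j) x *\<^sub>R wd ws (E j)"
    using linear_word_act[of av al ws] by (simp add: word_act_append r_def' linear_diff linear_scale)
  ultimately show ?case unfolding eqn using x by (intro Pos_add Pos_scale) auto
qed

lemma dom:
  assumes "\<forall>k. pairA (al k) x \<ge> 0" "w \<in> Wv av al"
  shows "x - w x \<in> Pos"
  using len_ex[OF assms(2)] dom_aux[OF assms(1)] by force

end

context KM begin

lemma orbit_lat: "\<exists>n::'i \<Rightarrow> int. embY lam - wd ws (embY lam) = (\<Sum>k\<in>UNIV. of_int (n k) *\<^sub>R E k)"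
proof (induction ws)
  case Nil then show ?case by (intro exI[of _ "\<lambda>_. 0"]) simp
next
  case (Cons i ws)
  then obtain n where n: "embY lam - wd ws (embY lam) = (\<Sum>k\<in>UNIV. of_int (n k) *\<^sub>R E k)" by blast
  define S where "S = (\<Sum>k\<in>UNIV. of_int (n k) *\<^sub>R E k)"
  define m where "m = pairY (al i) lam - (\<Sum>k\<in>UNIV. n k * A k i)"
  have y: "wd ws (embY lam) = embY lam - S"
  proof -
    have "embY lam - S = wd ws (embY lam)" unfolding S_def n[symmetric] by simp
    then show ?thesis by simp
  qed
  have pS: "pairA (al i) S = (\<Sum>k\<in>UNIV. of_int (n k) * of_int (A k i))"
    unfolding S_def by (simp add: pairA_sum pairA_scale pairE)
  have py: "pairA (al i) (wd ws (embY lam)) = of_int m"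
    unfolding y m_def by (simp add: pairA_diff pairA_embY pS)
  define n' where "n' k = n k + (if k = i then m else 0)" for k
  have "(\<Sum>k\<in>UNIV. of_int (n' k) *\<^sub>R E k) = (\<Sum>k\<in>UNIV. of_int (n k) *\<^sub>R E k + (if k = i then of_int m *\<^sub>R E i else 0))"
    by (rule sum.cong) (auto simp: n'_def scaleR_add_left)
  also have "\<dots> = S + (\<Sum>k\<in>UNIV. (if k = i then of_int m *\<^sub>R E i else 0))"
    by (simp only: sum.distrib S_def)
  also have "(\<Sum>k\<in>UNIV. (if k = i then of_int m *\<^sub>R E i else 0)) = of_int m *\<^sub>R E i"
    by simp
  finally have A: "(\<Sum>k\<in>UNIV. of_int (n' k) *\<^sub>R E k) = S + of_int m *\<^sub>R E i" .
  have B: "embY lam - wd (i # ws) (embY lam) = S + of_int m *\<^sub>R E i"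
    using y py by (simp add: r_def')
  show ?case by (rule exI[of _ n'], rule trans[OF B A[symmetric]])
qed

lemma Pos_lat:
  assumes "x \<in> Pos" "x = (\<Sum>k\<in>UNIV. of_int (n k) *\<^sub>R E k)"
  shows "n k \<ge> 0"
proof -
  obtain c where c: "\<forall>k. c k \<ge> 0" "x = (\<Sum>k\<in>UNIV. c k *\<^sub>R E k)" using assms(1) unfolding Pos_def by blast
  have "(\<Sum>k\<in>UNIV. (c k - of_int (n k)) *\<^sub>R E k) = 0"
    using c(2) assms(2) by (simp add: scaleR_diff_left sum_subtractf)
  then have "c k - of_int (n k) = 0" by (rule indep)
  then show ?thesis using c(1)[rule_format, of k] by simp
qed

lemma hull_max:
  assumes h: "linear (h :: real^'d \<Rightarrow> real)" and x: "x \<in> convex hull S"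
  shows "\<exists>y\<in>S. h x \<le> h y"
proof (rule ccontr)
  assume "\<not> ?thesis"
  then have S: "S \<subseteq> {z. h z < h x}" by auto
  have "convex {z. h z < h x}"
    unfolding convex_def
  proof (intro allI ballI impI CollectI; elim CollectE)
    fix y z and u v :: real assume yz: "h y < h x" "h z < h x" and uv: "0 \<le> u" "0 \<le> v" "u + v = 1"
    have e: "h (u *\<^sub>R y + v *\<^sub>R z) = u * h y + v * h z"
      using h by (simp add: linear_add linear_scale)
    show "h (u *\<^sub>R y + v *\<^sub>R z) < h x"
    proof (cases "u = 0")
      case True then show ?thesis using e yz uv by simp
    next
      case False
      then have "u * h y < u * h x" using uv yz by (intro mult_strict_left_mono) auto
      moreover have "v * h z \<le> v * h x" using uv yz by (intro mult_left_mono) auto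
      ultimately have "u * h y + v * h z < u * h x + v * h x" by (rule add_less_le_mono)
      moreover have "u * h x + v * h x = h x" using uv(3) by (simp add: distrib_right[symmetric])
      ultimately show ?thesis unfolding e by simp
    qed
  qed
  then have "convex hull S \<subseteq> {z. h z < h x}" using S by (rule hull_minimal[rotated])
  then show False using x by auto
qed

definition K where "K mu n = {wd vs (embY mu) | vs. length vs \<le> n}"

lemma K_mono: "n \<le> m \<Longrightarrow> K mu n \<subseteq> K mu m" unfolding K_def by auto

lemma hull_foldr: "y \<in> foldr (Ri av al) ws {mu} \<Longrightarrow> embY y \<in> convex hull (K mu (length ws))"
proof (induction ws arbitrary: y)
  case Nil then have "embY y \<in> K mu 0" unfolding K_def by (intro CollectI exI[of _ "[]"]) simp
  then show ?case using hull_inc[of "embY y" "K mu 0"] by simp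
next
  case (Cons i ws)
  define F where "F = foldr (Ri av al) ws {mu}"
  have y: "embY y \<in> convex hull (embY ` (F \<union> reflY av al i ` F))"
    using Cons.prems unfolding F_def Ri_def by simp
  have sub: "embY ` (F \<union> reflY av al i ` F) \<subseteq> convex hull (K mu (Suc (length ws)))"
  proof
    fix z assume "z \<in> embY ` (F \<union> reflY av al i ` F)"
    then consider e where "e \<in> F" "z = embY e" | e where "e \<in> F" "z = r i (embY e)"
      by (auto simp: r_embY)
    then show "z \<in> convex hull (K mu (Suc (length ws)))"
    proof cases
      case 1
      then have "z \<in> convex hull (K mu (length ws))" using Cons.IH F_def by simp
      then show ?thesis using hull_mono[OF K_mono[of "length ws" "Suc (length ws)" mu]] by auto
    next
      case 2
      then have "embY e \<in> convex hull (K mu (length ws))" using Cons.IH F_def by simp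
      then have "z \<in> convex hull (r i ` K mu (length ws))"
        using 2 in_convex_hull_linear_image[OF linear_reflA] by simp
      moreover have "r i ` K mu (length ws) \<subseteq> K mu (Suc (length ws))"
      proof
        fix z assume "z \<in> r i ` K mu (length ws)"
        then obtain vs where "length vs \<le> length ws" "z = r i (wd vs (embY mu))" unfolding K_def by auto
        then show "z \<in> K mu (Suc (length ws))" unfolding K_def by (intro CollectI exI[of _ "i # vs"]) auto
      qed
      ultimately show ?thesis by (meson hull_mono subsetD)
    qed
  qed
  have "convex hull (embY ` (F \<union> reflY av al i ` F)) \<subseteq> convex hull (K mu (Suc (length ws)))"
    using sub by (simp add: convex_hull_subset)
  then show ?case using y by auto
qed

lemma wd_inj: "inj (wd vs)"
proof -
  have inv: "wd (rev vs) (wd vs x) = x" for x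
    by (induction vs arbitrary: x) (auto simp: word_act_append)
  show ?thesis
  proof (rule injI)
    fix x y assume "wd vs x = wd vs y"
    then have "wd (rev vs) (wd vs x) = wd (rev vs) (wd vs y)" by simp
    then show "x = y" using inv by simp
  qed
qed

lemma main:
  assumes lam: "\<forall>k. pairA (al k) (embY lam) \<ge> 0" and u: "u \<in> Wv av al"
  shows "finite {mu \<in> Worbit av al lam. nu \<in> Rw av al u mu}"
proof -
  obtain wsu where wsu: "wd wsu = u" using u unfolding Wv_def by auto
  define L where "L = length wsu"
  obtain h :: "real^'d \<Rightarrow> real" where h: "linear h" "\<And>k. h (E k) = 1" using ex_h by blast
  define N0 where "N0 = \<lceil>h (embY lam) - h (embY nu)\<rceil>"
  define Box where "Box = {n :: 'i \<Rightarrow> int. \<forall>k. n k \<in> {0..N0}}"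
  have fBox: "finite Box"
  proof -
    have "Box = Pi\<^sub>E UNIV (\<lambda>_. {0..N0})" unfolding Box_def PiE_def Pi_def extensional_def by auto
    then show ?thesis by (simp add: finite_PiE)
  qed
  define T where "T = (\<Union>vs\<in>{vs. set vs \<subseteq> UNIV \<and> length vs \<le> L}. \<Union>n\<in>Box.
      (wd vs \<circ> embY) -` {embY lam - (\<Sum>k\<in>UNIV. of_int (n k) *\<^sub>R E k)})"
  have fT: "finite T" unfolding T_def
  proof (intro finite_UN_I finite_lists_length_le finite_vimageI)
    fix vs show "inj (wd vs \<circ> embY)" using wd_inj by (intro inj_compose) (auto intro: injI embY_inj)
  qed (auto simp: fBox)
  have "{mu \<in> Worbit av al lam. nu \<in> Rw av al u mu} \<subseteq> T"
  proof clarify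
    fix mu assume mu: "mu \<in> Worbit av al lam" and nu: "nu \<in> Rw av al u mu"
    obtain w where w: "w \<in> Wv av al" "embY mu = w (embY lam)" using mu unfolding Worbit_def by auto
    obtain wsw where wsw: "wd wsw = w" using w unfolding Wv_def by auto
    obtain ws where red: "reduced_expr av al u ws" and nuws: "nu \<in> foldr (Ri av al) ws {mu}"
      using nu unfolding Rw_def by auto
    have lws: "length ws \<le> L" using red wsu unfolding reduced_expr_def L_def by auto
    have "embY nu \<in> convex hull (K mu L)"
      using hull_foldr[OF nuws] hull_mono[OF K_mono[OF lws]] by auto
    then obtain g where g: "g \<in> K mu L" "h (embY nu) \<le> h g" using hull_max[OF h(1)] by blast
    then obtain vs where vs: "g = wd vs (embY mu)" "length vs \<le> L" unfolding K_def by auto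
    have gw: "g = wd (vs @ wsw) (embY lam)" using vs w wsw by (simp add: word_act_append)
    obtain n where n: "embY lam - g = (\<Sum>k\<in>UNIV. of_int (n k) *\<^sub>R E k)" using orbit_lat[of lam "vs @ wsw"] gw by auto
    have "embY lam - g \<in> Pos" using dom[OF lam, of "wd (vs @ wsw)"] gw by simp
    then have n0: "\<And>k. n k \<ge> 0" using Pos_lat n by blast
    have hsum: "h (embY lam - g) = (\<Sum>k\<in>UNIV. of_int (n k))"
      unfolding n using h by (simp add: linear_sum linear_scale)
    have hle: "h (embY lam - g) \<le> h (embY lam) - h (embY nu)"
      using g(2) h(1) by (simp add: linear_diff)
    have nB: "n \<in> Box"
    proof -
      have "of_int (n k) \<le> h (embY lam) - h (embY nu)" for k
      proof -
        have "of_int (n k) \<le> (\<Sum>k\<in>UNIV. (of_int (n k) :: real))"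
          by (rule member_le_sum) (use n0 in auto)
        then show ?thesis using hsum hle by linarith
      qed
      then have "n k \<le> N0" for k unfolding N0_def le_ceiling_iff by (smt (verit))
      then show ?thesis unfolding Box_def using n0 by auto
    qed
    have "embY lam - (\<Sum>k\<in>UNIV. of_int (n k) *\<^sub>R E k) = wd vs (embY mu)" unfolding n[symmetric] vs by simp
    then have "wd vs (embY mu) = embY lam - (\<Sum>k\<in>UNIV. of_int (n k) *\<^sub>R E k)" by simp
    then show "mu \<in> T" unfolding T_def using vs(2) nB by auto
  qed
  then show ?thesis using fT finite_subset by blast
qed

end


lemma pairA_cont: "continuous_on UNIV (pairA a)" unfolding pairA_def by (intro continuous_intros)

theorem mainTheorem10:
  fixes A :: "'i::finite \<Rightarrow> 'i \<Rightarrow> int"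
    and alphav alpha :: "'i \<Rightarrow> int^'d"
    and lam nu :: "int^'d"
    and u :: "real^'d \<Rightarrow> real^'d"
  assumes "root_datum A alphav alpha"
    and "lam \<in> Yplusplus alpha"
    and "nu \<in> Yplus alphav alpha"
    and "u \<in> Wv alphav alpha"
  shows "finite {mu \<in> Worbit alphav alpha lam. nu \<in> Rw alphav alpha u mu}"
proof -
  interpret KM A alphav alpha using assms(1) by (rule KM.intro)
  have "\<forall>k. pairA (alpha k) (embY lam) \<ge> 0"
  proof
    fix k
    have "closure (Cvf alpha) \<subseteq> {x. 0 \<le> pairA (alpha k) x}"
    proof (rule closure_minimal)
      show "Cvf alpha \<subseteq> {x. 0 \<le> pairA (alpha k) x}" unfolding Cvf_def by (auto intro: less_imp_le)
      show "closed {x. 0 \<le> pairA (alpha k) x}"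
        by (rule closed_Collect_le[OF continuous_on_const pairA_cont])
    qed
    then show "pairA (alpha k) (embY lam) \<ge> 0" using assms(2) unfolding Yplusplus_def by auto
  qed
  then show ?thesis using main assms(4) by blast
qed

end
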